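(* Let $\rho^n$ be a periodic grid function on the grid of $(0,1)^3$ with $\rho^n_{i,j,k}>0$ for all $0\le i,j,k\le N_0-1$, and let $\hat\rho^{n+1}$ be any periodic grid function with $\hat\rho^{n+1}_{i,j,k}>0$ for all indices (e.g. the solution of the semi-implicit predictor in the context). Set $\hat\rho^{n+1/2}=\tfrac12(\rho^n+\hat\rho^{n+1})$ and $\mathcal{M}^{n+1/2}_h=\mathcal{A}_h\big(D(\hat\rho^{n+1/2})\hat\rho^{n+1/2}\big)$. Then there exists a unique periodic grid function $\rho^{n+1}$ with $\rho^{n+1}_{i,j,k}>0$ for all indices satisfying $$\frac{\rho^{n+1}-\rho^n}{\Delta t}=\nabla_h\cdot\big(\mathcal{M}^{n+1/2}_h\nabla_h\mu^{n+1/2}\big),\qquad \mu^{n+1/2}=Q(\rho^{n+1},\rho^n)+\Delta t\,(\ln\rho^{n+1}-\ln\rho^n),$$ where all nonlinear functions are applied pointwise.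
   Context: $N_0\ge1$, $h=1/N_0$; grid functions live on $\{(ih,jh,kh):0\le i,j,k\le N_0-1\}$ and are periodic (indices mod $N_0$). $\Delta t>0$, $C\in\mathbb{R}$, $D:(0,\infty)\to(0,\infty)$ is a given (continuous) diffusion coefficient. $F(\rho)=\rho\ln\rho+C\rho$, and $Q(p,q)=\frac{F(p)-F(q)}{p-q}$ for $p\ne q$, $Q(p,p)=F'(p)=\ln p+1+C$. Discrete operators: $(\nabla_h f)$ has components at staggered points, e.g. $(D_xf)_{i+1/2,j,k}=(f_{i+1,j,k}-f_{i,j,k})/h$ and similarly in $y,z$; for a staggered vector field $\mathbf{v}=(v^x,v^y,v^z)$, $(\nabla_h\cdot\mathbf v)_{i,j,k}=(v^x_{i+1/2,j,k}-v^x_{i-1/2,j,k}+v^y_{i,j+1/2,k}-v^y_{i,j-1/2,k}+v^z_{i,j,k+1/2}-v^z_{i,j,k-1/2})/h$; the averaging operator $\mathcal{A}_h$ maps a cell-centered $g$ to staggered values, e.g. $(\mathcal{A}_hg)_{i+1/2,j,k}=\tfrac12(g_{i,j,k}+g_{i+1,j,k})$, and the product $\mathcal{M}\nabla_h\mu$ is taken componentwise at staggered points. A possible predictor is the semi-implicit scheme $\frac{\hat\rho^{n+1}-\rho^n}{\Delta t}=\nabla_h\cdot\big(\mathcal{A}_h[D(\rho^n)]\nabla_h\hat\rho^{n+1}\big)$, whose solution is positive when $\rho^n$ is. *)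

theory Defs
  imports Complex_Main
begin

type_synonym grid = "int \<Rightarrow> int \<Rightarrow> int \<Rightarrow> real"

text \<open>A grid function on the points (ih,jh,kh), h = 1/N0, extended periodically (indices mod N0).\<close>
definition periodic_grid :: "nat \<Rightarrow> grid \<Rightarrow> bool" where
  "periodic_grid N g \<longleftrightarrow>
     (\<forall>i j k. g i j k = g (i mod int N) (j mod int N) (k mod int N))"

definition in_grid :: "nat \<Rightarrow> int \<Rightarrow> int \<Rightarrow> int \<Rightarrow> bool" where
  "in_grid N i j k \<longleftrightarrow> 0 \<le> i \<and> i < int N \<and> 0 \<le> j \<and> j < int N \<and> 0 \<le> k \<and> k < int N"

definition Fen :: "real \<Rightarrow> real \<Rightarrow> real" where
  "Fen C r = r * ln r + C * r"

definition Qdq :: "real \<Rightarrow> real \<Rightarrow> real \<Rightarrow> real" where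
  "Qdq C p q = (if p \<noteq> q then (Fen C p - Fen C q) / (p - q) else ln p + 1 + C)"

text \<open>Staggered difference operators (value at i+1/2 stored at index i), h = 1/N.\<close>
definition Dx :: "nat \<Rightarrow> grid \<Rightarrow> grid" where
  "Dx N f i j k = (f (i+1) j k - f i j k) / (1 / real N)"
definition Dy :: "nat \<Rightarrow> grid \<Rightarrow> grid" where
  "Dy N f i j k = (f i (j+1) k - f i j k) / (1 / real N)"
definition Dz :: "nat \<Rightarrow> grid \<Rightarrow> grid" where
  "Dz N f i j k = (f i j (k+1) - f i j k) / (1 / real N)"

text \<open>Averaging operator A_h (value at i+1/2 stored at index i).\<close>
definition Ax :: "grid \<Rightarrow> grid" where "Ax g i j k = (g i j k + g (i+1) j k) / 2"
definition Ay :: "grid \<Rightarrow> grid" where "Ay g i j k = (g i j k + g i (j+1) k) / 2"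
definition Az :: "grid \<Rightarrow> grid" where "Az g i j k = (g i j k + g i j (k+1)) / 2"

text \<open>Discrete divergence of a staggered field (vx,vy,vz), component at i+1/2 stored at i.\<close>
definition div_h :: "nat \<Rightarrow> grid \<Rightarrow> grid \<Rightarrow> grid \<Rightarrow> grid" where
  "div_h N vx vy vz i j k =
     (vx i j k - vx (i-1) j k + vy i j k - vy i (j-1) k + vz i j k - vz i j (k-1)) / (1 / real N)"

definition div_mob_grad :: "nat \<Rightarrow> grid \<Rightarrow> grid \<Rightarrow> grid" where
  "div_mob_grad N m mu =
     div_h N (\<lambda>i j k. Ax m i j k * Dx N mu i j k)
             (\<lambda>i j k. Ay m i j k * Dy N mu i j k)
             (\<lambda>i j k. Az m i j k * Dz N mu i j k)"

end

theory Submission imports Defs "HOL-Analysis.Analysis" begin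

lemma Fen_deriv: "x > 0 \<Longrightarrow> (Fen C has_real_derivative (ln x + 1 + C)) (at x)"
  unfolding Fen_def[abs_def]
  by (auto intro!: derivative_eq_intros simp: field_simps)

lemma Fen_convex: "convex_on {0<..} (Fen C)"
proof (rule f''_ge0_imp_convex[where f'="\<lambda>x. ln x + 1 + C" and f''="\<lambda>x. 1/x"])
  show "convex {0::real<..}" by simp
  fix x :: real assume "x \<in> {0<..}" then have x: "x > 0" by simp
  show "(Fen C has_real_derivative (ln x + 1 + C)) (at x)" using Fen_deriv[OF x] .
  show "((\<lambda>x. ln x + 1 + C) has_real_derivative (1/x)) (at x)"
    using x by (auto intro!: derivative_eq_intros)
  show "0 \<le> 1/x" using x by simp
qed

lemma Fen_tangent: "x > 0 \<Longrightarrow> p > 0 \<Longrightarrow> Fen C x \<ge> Fen C p + (ln p + 1 + C) * (x - p)"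
proof -
  assume x: "x > 0" and p: "p > 0"
  have "ln (p/x) \<le> p/x - 1" using x p by (intro ln_le_minus_one) simp
  then have "ln p - ln x \<le> p/x - 1" using x p by (simp add: ln_div)
  then have "x * (ln p - ln x) \<le> x * (p/x - 1)" using x by (intro mult_left_mono) auto
  then have "x * ln p - x * ln x \<le> p - x" using x by (simp add: right_diff_distrib)
  then show ?thesis unfolding Fen_def by (simp add: algebra_simps)
qed

lemma Q_mono:
  assumes a: "0 < a" and ab: "a \<le> b" and p: "0 < p"
  shows "Qdq C a p \<le> Qdq C b p"
proof (cases "a = b")
  case True then show ?thesis by simp
next
  case False
  with ab have ab: "a < b" by simp
  have cv: "convex_on {0<..} (Fen C)" by (rule Fen_convex)
  have sym: "\<And>u v. (Fen C u - Fen C v) / (u - v) = (Fen C v - Fen C u) / (v - u)"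
    by (metis minus_divide_divide minus_diff_eq)
  show ?thesis
  proof (cases "b < p")
    case True
    then show ?thesis using convex_on_slope_le(2)[OF cv, of a p b] a ab p
      by (simp add: Qdq_def)
  next
    case bp: False
    show ?thesis
    proof (cases "p < a")
      case True
      then show ?thesis using convex_on_slope_le(1)[OF cv, of p b a] a ab p sym[of a p] sym[of b p]
        by (simp add: Qdq_def)
    next
      case pa: False
      show ?thesis
      proof (cases "a = p")
        case True
        then have bp': "b > p" using ab by simp
        have "Fen C b \<ge> Fen C p + (ln p + 1 + C) * (b - p)" using Fen_tangent[of b p C] bp' p by simp
        then have "ln p + 1 + C \<le> (Fen C b - Fen C p) / (b - p)" using bp' by (simp add: field_simps)
        then show ?thesis using True bp' by (simp add: Qdq_def)
      next
        case ap: False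
        then have ap: "a < p" using pa by simp
        show ?thesis
        proof (cases "b = p")
          case True
          have "Fen C a \<ge> Fen C p + (ln p + 1 + C) * (a - p)" using Fen_tangent[of a p C] a p by simp
          then have "(Fen C a - Fen C p) / (a - p) \<le> ln p + 1 + C" using ap by (simp add: field_simps)
          then show ?thesis using True ap by (simp add: Qdq_def)
        next
          case False
          then have pb: "p < b" using bp by simp
          have "(Fen C a - Fen C p) / (a - p) \<le> (Fen C a - Fen C b) / (a - b)"
            using convex_on_slope_le(1)[OF cv, of a b p] a ap pb p by simp
          also have "\<dots> \<le> (Fen C p - Fen C b) / (p - b)"
            using convex_on_slope_le(2)[OF cv, of a b p] a ap pb p by simp
          finally show ?thesis using ap pb sym[of b p] by (simp add: Qdq_def)
        qed
      qed
    qed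
  qed
qed

lemma Q_cont:
  assumes t: "0 < t" and p: "0 < p"
  shows "isCont (\<lambda>x. Qdq C x p) t"
proof (cases "t = p")
  case True
  have "((\<lambda>y. (Fen C y - Fen C p) / (y - p)) \<longlongrightarrow> ln p + 1 + C) (at p)"
    using Fen_deriv[OF p, of C] by (simp add: has_field_derivative_iff)
  then have "((\<lambda>x. Qdq C x p) \<longlongrightarrow> Qdq C p p) (at p)"
    by (rule LIM_cong[THEN iffD1, rotated -1]) (auto simp: Qdq_def)
  then show ?thesis using True by (simp add: isCont_def)
next
  case False
  have ev: "eventually (\<lambda>x. Qdq C x p = (Fen C x - Fen C p) / (x - p)) (nhds t)"
    using t1_space_nhds[OF False] by eventually_elim (simp add: Qdq_def)
  have "isCont (\<lambda>x. (Fen C x - Fen C p) / (x - p)) t"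
    using t False unfolding Fen_def by (auto intro!: continuous_intros)
  then show ?thesis using isCont_cong[OF ev] by simp
qed


lemma isCont_eps:
  fixes f :: "real \<Rightarrow> real"
  assumes "isCont f a" "e > 0"
  shows "\<exists>d>0. \<forall>t. \<bar>t - a\<bar> < d \<longrightarrow> \<bar>f t - f a\<bar> < e"
proof -
  from assms(1) have "f \<midarrow>a\<rightarrow> f a" by (simp add: isCont_def)
  then obtain d where d: "d > 0" "\<forall>x. x \<noteq> a \<and> norm (x - a) < d \<longrightarrow> norm (f x - f a) < e"
    using assms(2) unfolding LIM_eq by blast
  show ?thesis using d assms(2) by (intro exI[of _ d]) (auto, metis abs_0 diff_self real_norm_def)
qed

definition gridset :: "nat \<Rightarrow> (int \<times> int \<times> int) set" where
  "gridset N = {0..<int N} \<times> {0..<int N} \<times> {0..<int N}"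

lemma finite_gridset: "finite (gridset N)" by (simp add: gridset_def)

lemma in_grid_gridset: "in_grid N i j k \<longleftrightarrow> (i, j, k) \<in> gridset N"
  by (auto simp: in_grid_def gridset_def)

lemma mod_in_grid: "N \<ge> 1 \<Longrightarrow> in_grid N (i mod int N) (j mod int N) (k mod int N)"
  by (auto simp: in_grid_def)

lemma in_grid_mod: "in_grid N i j k \<Longrightarrow> i mod int N = i \<and> j mod int N = j \<and> k mod int N = k"
  by (auto simp: in_grid_def)

lemma periodic_val_in: "N \<ge> 1 \<Longrightarrow> periodic_grid N g \<Longrightarrow> g i j k \<in> (\<lambda>(a,b,c). g a b c) ` gridset N"
  unfolding periodic_grid_def
  by (rule image_eqI[of _ _ "(i mod int N, j mod int N, k mod int N)"])
     (auto simp: gridset_def)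

lemma periodic_pos: "N \<ge> 1 \<Longrightarrow> periodic_grid N g \<Longrightarrow> (\<forall>i j k. in_grid N i j k \<longrightarrow> g i j k > 0)
   \<Longrightarrow> g i j k > 0"
  unfolding periodic_grid_def by (metis mod_in_grid)

lemma periodic_le: "N \<ge> 1 \<Longrightarrow> periodic_grid N r \<Longrightarrow> periodic_grid N s
   \<Longrightarrow> (\<forall>i j k. in_grid N i j k \<longrightarrow> r i j k \<le> s i j k) \<Longrightarrow> r i j k \<le> s i j k"
  unfolding periodic_grid_def by (metis mod_in_grid)

definition lapl :: "grid \<Rightarrow> grid \<Rightarrow> grid" where
  "lapl m u i j k =
     Ax m i j k * (u (i+1) j k - u i j k) + Ax m (i-1) j k * (u (i-1) j k - u i j k)
   + Ay m i j k * (u i (j+1) k - u i j k) + Ay m i (j-1) k * (u i (j-1) k - u i j k)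
   + Az m i j k * (u i j (k+1) - u i j k) + Az m i j (k-1) * (u i j (k-1) - u i j k)"

definition Wt :: "grid \<Rightarrow> grid" where
  "Wt m i j k = Ax m i j k + Ax m (i-1) j k + Ay m i j k + Ay m i (j-1) k + Az m i j k + Az m i j (k-1)"

lemma div_mob_grad_lapl: "N \<ge> 1 \<Longrightarrow> div_mob_grad N m u i j k = (real N)^2 * lapl m u i j k"
  unfolding div_mob_grad_def div_h_def lapl_def Dx_def Dy_def Dz_def
  by (simp add: field_simps power2_eq_square)

lemma lapl_diff: "lapl m u i j k - lapl m v i j k = lapl m (\<lambda>a b c. u a b c - v a b c) i j k"
  unfolding lapl_def by (simp add: algebra_simps)

lemma lapl_const: "lapl m (\<lambda>a b c. z) i j k = 0"
  unfolding lapl_def by simp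

context
  fixes m :: grid
  assumes mpos: "\<And>a b c. m a b c > 0"
begin

lemma weights_pos: "Ax m i j k > 0" "Ay m i j k > 0" "Az m i j k > 0"
  unfolding Ax_def Ay_def Az_def using mpos by (auto intro: add_pos_pos)

lemma Wt_nonneg: "Wt m i j k \<ge> 0"
  unfolding Wt_def using weights_pos[of "i-1" j k] weights_pos[of i j k] weights_pos[of i "j-1" k]
    weights_pos[of i j "k-1"] by simp

lemma lapl_max: assumes "\<And>a b c. d a b c \<le> d i j k" shows "lapl m d i j k \<le> 0"
proof -
  have "\<And>w x. w > 0 \<Longrightarrow> x \<le> d i j k \<Longrightarrow> w * (x - d i j k) \<le> 0"
    by (simp add: mult_nonneg_nonpos)
  then show ?thesis unfolding lapl_def
    using assms weights_pos[of "i-1" j k] weights_pos[of i j k] weights_pos[of i "j-1" k]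
      weights_pos[of i j "k-1"]
    by (smt (verit))
qed

lemma lapl_lower: assumes "\<And>a b c. d a b c \<ge> 0" shows "lapl m d i j k \<ge> - Wt m i j k * d i j k"
proof -
  have "\<And>w x. w > 0 \<Longrightarrow> x \<ge> 0 \<Longrightarrow> w * x \<ge> (0::real)" by simp
  then show ?thesis unfolding lapl_def Wt_def
    using assms weights_pos[of "i-1" j k] weights_pos[of i j k] weights_pos[of i "j-1" k]
      weights_pos[of i j "k-1"]
    by (simp add: algebra_simps)
qed

end

locale prob =
  fixes N :: nat and dt C :: real and m rho :: grid
  assumes N1: "N \<ge> 1" and dt: "dt > 0" and mpos: "\<And>a b c. m a b c > 0"
    and rper: "periodic_grid N rho" and rpos: "\<And>a b c. rho a b c > 0"
begin

definition mf :: "real \<Rightarrow> real \<Rightarrow> real" where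
  "mf p t = Qdq C t p + dt * (ln t - ln p)"

definition mu :: "grid \<Rightarrow> grid" where
  "mu r = (\<lambda>a b c. mf (rho a b c) (r a b c))"

definition Phi :: "grid \<Rightarrow> grid" where
  "Phi r i j k = (r i j k - rho i j k) / dt - (real N)^2 * lapl m (mu r) i j k"

lemma mf_mono: "0 < a \<Longrightarrow> a \<le> b \<Longrightarrow> 0 < p \<Longrightarrow> mf p a \<le> mf p b"
  unfolding mf_def using Q_mono[of a b p C] dt
  by (smt (verit) ln_le_cancel_iff mult_left_mono)

lemma mf_strict: "0 < a \<Longrightarrow> a < b \<Longrightarrow> 0 < p \<Longrightarrow> mf p a < mf p b"
  unfolding mf_def using Q_mono[of a b p C] dt
  by (smt (verit) ln_less_cancel_iff mult_strict_left_mono)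

lemma mf_le_iff: "0 < a \<Longrightarrow> 0 < b \<Longrightarrow> 0 < p \<Longrightarrow> mf p a \<le> mf p b \<longleftrightarrow> a \<le> b"
  using mf_mono mf_strict by (meson not_le)

lemma mf_cont: "0 < t \<Longrightarrow> 0 < p \<Longrightarrow> isCont (mf p) t"
  unfolding mf_def[abs_def] using Q_cont[of t p C]
  by (auto intro!: continuous_intros)

lemma mf_pp: "mf p p = ln p + 1 + C"
  unfolding mf_def Qdq_def by simp

lemma mf_surj: assumes p: "0 < p" shows "\<exists>t>0. mf p t = a"
proof -
  define L where "L = (a - ln p - 1 - C) / dt + ln p"
  define lo where "lo = exp (min (ln p) L)"
  define hi where "hi = exp (max (ln p) L)"
  have lo: "0 < lo" "lo \<le> p" using p
    by (auto simp: lo_def) (metis exp_ln min.cobounded1 exp_le_cancel_iff p)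
  have hi: "0 < hi" "p \<le> hi" using p
    by (auto simp: hi_def) (metis exp_ln max.cobounded1 exp_le_cancel_iff p)
  have "Qdq C lo p \<le> ln p + 1 + C" using Q_mono[OF lo(1) lo(2) p, of C] by (simp add: Qdq_def)
  moreover have "dt * (ln lo - ln p) \<le> dt * (L - ln p)"
    using dt by (intro mult_left_mono) (auto simp: lo_def)
  moreover have "ln p + 1 + C + dt * (L - ln p) = a" using dt by (simp add: L_def field_simps)
  ultimately have mlo: "mf p lo \<le> a" unfolding mf_def by linarith
  have "Qdq C hi p \<ge> ln p + 1 + C" using Q_mono[OF p hi(2) p, of C] by (simp add: Qdq_def)
  moreover have "dt * (ln hi - ln p) \<ge> dt * (L - ln p)"
    using dt by (intro mult_left_mono) (auto simp: hi_def)
  moreover have "ln p + 1 + C + dt * (L - ln p) = a" using dt by (simp add: L_def field_simps)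
  ultimately have mhi: "mf p hi \<ge> a" unfolding mf_def by linarith
  have "lo \<le> hi" using lo hi by simp
  from IVT[of "mf p" lo a hi, OF mlo mhi this] obtain t where "lo \<le> t" "t \<le> hi" "mf p t = a"
    using mf_cont lo(1) p by force
  then show ?thesis using lo(1) by (intro exI[of _ t]) auto
qed

lemma mu_periodic: "periodic_grid N r \<Longrightarrow> periodic_grid N (mu r)"
  using rper unfolding periodic_grid_def mu_def by metis

lemma Phi_E:
  assumes le: "\<And>a b c. r a b c \<le> r' a b c" and pos: "\<And>a b c. r a b c > 0"
  shows "Phi r' i j k \<le> Phi r i j k + (r' i j k - r i j k) / dt
           + (real N)^2 * Wt m i j k * (mu r' i j k - mu r i j k)"
proof -
  define d where "d = (\<lambda>a b c. mu r' a b c - mu r a b c)"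
  have d0: "d a b c \<ge> 0" for a b c
    unfolding d_def mu_def using mf_mono[OF pos le rpos] by simp
  have "lapl m d i j k \<ge> - Wt m i j k * d i j k" by (rule lapl_lower[OF mpos d0])
  moreover have "lapl m (mu r') i j k - lapl m (mu r) i j k = lapl m d i j k"
    unfolding d_def by (rule lapl_diff)
  ultimately have "lapl m (mu r') i j k \<ge> lapl m (mu r) i j k - Wt m i j k * d i j k" by simp
  then have "(real N)^2 * lapl m (mu r') i j k \<ge> (real N)^2 * (lapl m (mu r) i j k - Wt m i j k * d i j k)"
    by (intro mult_left_mono) auto
  then show ?thesis unfolding Phi_def d_def by (simp add: algebra_simps diff_divide_distrib)
qed

lemma compare:
  assumes rp: "periodic_grid N r" and sp: "periodic_grid N s"
    and rpo: "\<And>a b c. r a b c > 0" and spo: "\<And>a b c. s a b c > 0"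
    and sub: "\<And>i j k. in_grid N i j k \<Longrightarrow> Phi r i j k \<le> 0"
    and sup: "\<And>i j k. in_grid N i j k \<Longrightarrow> Phi s i j k \<ge> 0"
    and g: "in_grid N i j k"
  shows "r i j k \<le> s i j k"
proof (rule ccontr)
  assume "\<not> r i j k \<le> s i j k"
  then have rs: "s i j k < r i j k" by simp
  define d where "d = (\<lambda>a b c. mu r a b c - mu s a b c)"
  have dp: "periodic_grid N d" using mu_periodic[OF rp] mu_periodic[OF sp]
    unfolding d_def periodic_grid_def by metis
  define M where "M = Max ((\<lambda>(a,b,c). d a b c) ` gridset N)"
  have fin: "finite ((\<lambda>(a,b,c). d a b c) ` gridset N)" by (simp add: finite_gridset)
  have dM: "d a b c \<le> M" for a b c
    unfolding M_def using periodic_val_in[OF N1 dp] fin by (intro Max_ge) auto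
  have "M \<in> (\<lambda>(a,b,c). d a b c) ` gridset N"
    unfolding M_def using fin periodic_val_in[OF N1 dp, of 0 0 0] by (intro Max_in) auto
  then obtain i0 j0 k0 where g0: "(i0,j0,k0) \<in> gridset N" and d0: "d i0 j0 k0 = M" by auto
  have "d i j k > 0" unfolding d_def mu_def using mf_strict[OF spo rs rpos] by simp
  then have "d i0 j0 k0 > 0" using dM d0 by (metis order.strict_trans2)
  then have rs0: "r i0 j0 k0 > s i0 j0 k0"
    unfolding d_def mu_def by (smt (verit) mf_mono rpo rpos)
  have "lapl m d i0 j0 k0 \<le> 0" using dM d0 by (intro lapl_max[OF mpos]) simp
  moreover have "lapl m (mu r) i0 j0 k0 - lapl m (mu s) i0 j0 k0 = lapl m d i0 j0 k0"
    unfolding d_def by (rule lapl_diff)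
  ultimately have "(real N)^2 * lapl m (mu r) i0 j0 k0 \<le> (real N)^2 * lapl m (mu s) i0 j0 k0"
    by (intro mult_left_mono) auto
  moreover have "(r i0 j0 k0 - rho i0 j0 k0) / dt > (s i0 j0 k0 - rho i0 j0 k0) / dt"
    using rs0 dt by (simp add: divide_strict_right_mono)
  ultimately have "Phi r i0 j0 k0 > Phi s i0 j0 k0" unfolding Phi_def by simp
  moreover have "in_grid N i0 j0 k0" using g0 in_grid_gridset by blast
  ultimately show False using sub sup by fastforce
qed

end

context prob begin

definition Sset :: "grid set" where
  "Sset = {r. periodic_grid N r \<and> (\<forall>a b c. r a b c > 0) \<and> (\<forall>i j k. in_grid N i j k \<longrightarrow> Phi r i j k \<le> 0)}"

definition rb :: "real \<Rightarrow> grid" where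
  "rb z = (\<lambda>i j k. SOME t. t > 0 \<and> mf (rho i j k) t = z)"

lemma rb_prop: "rb z i j k > 0 \<and> mf (rho i j k) (rb z i j k) = z"
  unfolding rb_def using someI_ex[OF mf_surj[OF rpos[of i j k], of z]] by simp

lemma rb_per: "periodic_grid N (rb z)"
  using rper unfolding periodic_grid_def rb_def by metis

lemma Phi_rb: "Phi (rb z) i j k = (rb z i j k - rho i j k) / dt"
proof -
  have "mu (rb z) = (\<lambda>a b c. z)" unfolding mu_def using rb_prop by auto
  then show ?thesis unfolding Phi_def by (simp add: lapl_const)
qed

definition lnr where "lnr = (\<lambda>a b c. ln (rho a b c) + 1 + C)"
lemma lnr_per: "periodic_grid N lnr" using rper unfolding periodic_grid_def lnr_def by metis

definition amin where "amin = Min ((\<lambda>(a,b,c). lnr a b c) ` gridset N)"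
definition amax where "amax = Max ((\<lambda>(a,b,c). lnr a b c) ` gridset N)"

lemma amin_le: "amin \<le> lnr a b c"
  unfolding amin_def using periodic_val_in[OF N1 lnr_per] by (intro Min_le) (auto simp: finite_gridset)
lemma amax_ge: "amax \<ge> lnr a b c"
  unfolding amax_def using periodic_val_in[OF N1 lnr_per] by (intro Max_ge) (auto simp: finite_gridset)

lemma rlo_S: "rb amin \<in> Sset"
proof -
  have "rb amin i j k \<le> rho i j k" for i j k
    using mf_le_iff[of "rb amin i j k" "rho i j k" "rho i j k"] rb_prop[of amin i j k] rpos[of i j k]
      amin_le[of i j k] by (simp add: mf_pp lnr_def)
  then show ?thesis unfolding Sset_def using rb_per rb_prop dt
    by (auto simp: Phi_rb divide_nonpos_pos)
qed

lemma rhi_sup: "Phi (rb amax) i j k \<ge> 0"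
proof -
  have "rb amax i j k \<ge> rho i j k"
    using mf_le_iff[of "rho i j k" "rb amax i j k" "rho i j k"] rb_prop[of amax i j k] rpos[of i j k]
      amax_ge[of i j k] by (simp add: mf_pp lnr_def)
  then show ?thesis using dt by (simp add: Phi_rb)
qed

lemma S_bound: "r \<in> Sset \<Longrightarrow> r a b c \<le> rb amax a b c"
  apply (rule periodic_le[OF N1 _ rb_per])
   apply (simp add: Sset_def)
  apply (intro allI impI compare[OF _ rb_per])
  using rb_prop rhi_sup by (auto simp: Sset_def)

definition rs :: grid where "rs = (\<lambda>a b c. Sup ((\<lambda>r. r a b c) ` Sset))"

lemma S_ne: "(\<lambda>r. r a b c) ` Sset \<noteq> {}" using rlo_S by auto
lemma S_bdd: "bdd_above ((\<lambda>r. r a b c) ` Sset)"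
  using S_bound by (intro bdd_aboveI[of _ "rb amax a b c"]) auto

lemma rs_ge: "r \<in> Sset \<Longrightarrow> r a b c \<le> rs a b c"
  unfolding rs_def using S_bdd by (intro cSup_upper) auto

lemma rs_pos: "rs a b c > 0"
  using rs_ge[OF rlo_S] rb_prop by (smt (verit))

lemma rs_per: "periodic_grid N rs"
proof -
  have "(\<lambda>r. r a b c) ` Sset = (\<lambda>r. r (a mod int N) (b mod int N) (c mod int N)) ` Sset" for a b c
    by (rule image_cong) (auto simp: Sset_def periodic_grid_def)
  then show ?thesis unfolding periodic_grid_def rs_def by simp
qed

lemma rs_sub: assumes g: "in_grid N i j k" shows "Phi rs i j k \<le> 0"
proof (rule ccontr)
  assume "\<not> ?thesis"
  then have eta: "Phi rs i j k > 0" by simp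
  define K where "K = (real N)^2 * Wt m i j k"
  have K0: "K \<ge> 0" unfolding K_def using Wt_nonneg[OF mpos] by simp
  define e where "e = Phi rs i j k / (2 * (K + 1))"
  have e0: "e > 0" unfolding e_def using eta K0 by simp
  obtain d where d: "d > 0" "\<And>t. \<bar>t - rs i j k\<bar> < d \<Longrightarrow> \<bar>mf (rho i j k) t - mf (rho i j k) (rs i j k)\<bar> < e"
    using isCont_eps[OF mf_cont[OF rs_pos rpos] e0] by blast
  define d' where "d' = min d (Phi rs i j k * dt / 2)"
  have d'0: "d' > 0" unfolding d'_def using d eta dt by simp
  have "rs i j k - d' < Sup ((\<lambda>r. r i j k) ` Sset)" using d'0 by (simp add: rs_def)
  then obtain r where rS: "r \<in> Sset" and rgt: "rs i j k - d' < r i j k"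
    using less_cSupE[OF _ S_ne] by blast
  have rle: "\<And>a b c. r a b c \<le> rs a b c" using rs_ge[OF rS] .
  have rpo: "\<And>a b c. r a b c > 0" using rS by (simp add: Sset_def)
  have E: "Phi rs i j k \<le> Phi r i j k + (rs i j k - r i j k) / dt + K * (mu rs i j k - mu r i j k)"
    using Phi_E[where r=r and r'=rs and i=i and j=j and k=k, OF rle rpo] unfolding K_def by simp
  have "Phi r i j k \<le> 0" using rS g by (simp add: Sset_def)
  moreover have "(rs i j k - r i j k) / dt < Phi rs i j k / 2"
  proof -
    have "rs i j k - r i j k < Phi rs i j k * dt / 2" using rgt d'_def by linarith
    then show ?thesis using dt by (simp add: field_simps)
  qed
  moreover have "K * (mu rs i j k - mu r i j k) < Phi rs i j k / 2"
  proof -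
    have "rs i j k - r i j k < d" using rgt d'_def by (smt (verit) min.cobounded1)
    then have "\<bar>r i j k - rs i j k\<bar> < d" using rle[of i j k] by (smt (verit))
    then have "\<bar>mf (rho i j k) (r i j k) - mf (rho i j k) (rs i j k)\<bar> < e"
      using d(2) by blast
    then have h: "mu rs i j k - mu r i j k < e" by (simp add: mu_def)
    have "K * (mu rs i j k - mu r i j k) \<le> K * e"
      using h K0 by (intro mult_left_mono) auto
    also have "K * e < Phi rs i j k / 2" unfolding e_def using K0 eta
      by (simp add: field_simps)
    finally show ?thesis .
  qed
  ultimately show False using E by linarith
qed

lemma rs_eq: assumes g: "in_grid N i j k" shows "Phi rs i j k = 0"
proof (rule ccontr)
  assume "\<not> ?thesis"
  with rs_sub[OF g] have eta: "Phi rs i j k < 0" by simp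
  define eta' where "eta' = - Phi rs i j k"
  have eta'0: "eta' > 0" using eta by (simp add: eta'_def)
  define K where "K = (real N)^2 * Wt m i j k"
  have K0: "K \<ge> 0" unfolding K_def using Wt_nonneg[OF mpos] by simp
  define e where "e = eta' / (2 * (K + 1))"
  have e0: "e > 0" unfolding e_def using eta'0 K0 by simp
  obtain d where d: "d > 0" "\<And>t. \<bar>t - rs i j k\<bar> < d \<Longrightarrow> \<bar>mf (rho i j k) t - mf (rho i j k) (rs i j k)\<bar> < e"
    using isCont_eps[OF mf_cont[OF rs_pos rpos] e0] by blast
  define b where "b = min (d/2) (eta' * dt / 2)"
  have b0: "b > 0" unfolding b_def using d eta'0 dt by simp
  define r' where "r' = (\<lambda>a1 b1 c1. rs a1 b1 c1 +
      (if a1 mod int N = i \<and> b1 mod int N = j \<and> c1 mod int N = k then b else 0))"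
  have le: "\<And>a b c. rs a b c \<le> r' a b c" unfolding r'_def using b0 by simp
  have r'x: "r' i j k = rs i j k + b" unfolding r'_def using in_grid_mod[OF g] by simp
  have r'per: "periodic_grid N r'"
    using rs_per unfolding periodic_grid_def r'_def by simp
  have r'pos: "r' a b c > 0" for a b c using le[of a b c] rs_pos[of a b c] by simp
  have "Phi r' y1 y2 y3 \<le> 0" if gy: "in_grid N y1 y2 y3" for y1 y2 y3
  proof (cases "y1 = i \<and> y2 = j \<and> y3 = k")
    case False
    then have "r' y1 y2 y3 = rs y1 y2 y3" unfolding r'_def using in_grid_mod[OF gy] by auto
    then have "Phi r' y1 y2 y3 \<le> Phi rs y1 y2 y3" using Phi_E[where r=rs and r'=r' and i=y1 and j=y2 and k=y3, OF le rs_pos] by (simp add: mu_def)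
    then show ?thesis using rs_sub[OF gy] by simp
  next
    case True
    have E: "Phi r' i j k \<le> Phi rs i j k + b / dt + K * (mu r' i j k - mu rs i j k)"
      using Phi_E[where r=rs and r'=r' and i=i and j=j and k=k, OF le rs_pos] r'x unfolding K_def by simp
    have "b / dt \<le> eta' / 2"
    proof -
      have "b \<le> eta' * dt / 2" unfolding b_def by simp
      then show ?thesis using dt by (simp add: field_simps)
    qed
    moreover have "K * (mu r' i j k - mu rs i j k) < eta' / 2"
    proof -
      have "\<bar>mf (rho i j k) (rs i j k + b) - mf (rho i j k) (rs i j k)\<bar> < e"
        using d(2)[of "rs i j k + b"] b0 b_def d(1) by simp
      then have h: "mu r' i j k - mu rs i j k < e" by (simp add: mu_def r'x)
      have "K * (mu r' i j k - mu rs i j k) \<le> K * e"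
        using h K0 by (intro mult_left_mono) auto
      also have "K * e < eta' / 2" unfolding e_def using K0 eta'0
        by (simp add: field_simps)
      finally show ?thesis .
    qed
    ultimately have "Phi r' i j k \<le> 0" using E eta'_def by linarith
    then show ?thesis using True by simp
  qed
  then have "r' \<in> Sset" unfolding Sset_def using r'per r'pos by blast
  then have "r' i j k \<le> rs i j k" by (rule rs_ge)
  then show False using r'x b0 by simp
qed

lemma existence: "\<exists>r. periodic_grid N r \<and> (\<forall>a b c. r a b c > 0) \<and> (\<forall>i j k. in_grid N i j k \<longrightarrow> Phi r i j k = 0)"
  using rs_per rs_pos rs_eq by blast

end

theorem theorem3p5:
  fixes N0 :: nat and dt C :: real and D :: "real \<Rightarrow> real" and rho rhohat :: grid
  assumes "N0 \<ge> 1" and "dt > 0"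
    and "continuous_on {0<..} D" and "\<forall>x>0. D x > 0"
    and "periodic_grid N0 rho" and "\<forall>i j k. in_grid N0 i j k \<longrightarrow> rho i j k > 0"
    and "periodic_grid N0 rhohat" and "\<forall>i j k. in_grid N0 i j k \<longrightarrow> rhohat i j k > 0"
  shows "\<exists>!r :: grid. periodic_grid N0 r
           \<and> (\<forall>i j k. in_grid N0 i j k \<longrightarrow> r i j k > 0)
           \<and> (\<forall>i j k. in_grid N0 i j k \<longrightarrow>
                 (r i j k - rho i j k) / dt =
                 div_mob_grad N0
                   (\<lambda>a b c. D ((rho a b c + rhohat a b c) / 2) * ((rho a b c + rhohat a b c) / 2))
                   (\<lambda>a b c. Qdq C (r a b c) (rho a b c) + dt * (ln (r a b c) - ln (rho a b c)))
                   i j k)"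
proof -
  note N1 = assms(1) and dt = assms(2) and Dpos = assms(4)
  have rpos: "\<And>a b c. rho a b c > 0" using periodic_pos[OF N1 assms(5) assms(6)] by blast
  have hpos: "\<And>a b c. rhohat a b c > 0" using periodic_pos[OF N1 assms(7) assms(8)] by blast
  have mpos: "\<And>a b c. D ((rho a b c + rhohat a b c) / 2) * ((rho a b c + rhohat a b c) / 2) > 0"
  proof -
    fix a b c
    have "(rho a b c + rhohat a b c) / 2 > 0" using rpos[of a b c] hpos[of a b c] by simp
    then show "D ((rho a b c + rhohat a b c) / 2) * ((rho a b c + rhohat a b c) / 2) > 0"
      using Dpos by simp
  qed
  interpret P: prob N0 dt C "\<lambda>a b c. D ((rho a b c + rhohat a b c) / 2) * ((rho a b c + rhohat a b c) / 2)" rho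
    using N1 dt mpos assms(5) rpos by unfold_locales auto
  have eqv: "((r i j k - rho i j k) / dt =
                 div_mob_grad N0
                   (\<lambda>a b c. D ((rho a b c + rhohat a b c) / 2) * ((rho a b c + rhohat a b c) / 2))
                   (\<lambda>a b c. Qdq C (r a b c) (rho a b c) + dt * (ln (r a b c) - ln (rho a b c)))
                   i j k) \<longleftrightarrow> P.Phi r i j k = 0" for r i j k
  proof -
    have "(\<lambda>a b c. Qdq C (r a b c) (rho a b c) + dt * (ln (r a b c) - ln (rho a b c))) = P.mu r"
      by (simp add: P.mu_def P.mf_def)
    then show ?thesis unfolding P.Phi_def div_mob_grad_lapl[OF N1] by simp
  qed
  obtain r where r: "periodic_grid N0 r" "\<And>a b c. r a b c > 0" "\<And>i j k. in_grid N0 i j k \<Longrightarrow> P.Phi r i j k = 0"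
    using P.existence by blast
  show ?thesis
  proof (rule ex1I[of _ r])
    show "periodic_grid N0 r \<and> (\<forall>i j k. in_grid N0 i j k \<longrightarrow> r i j k > 0) \<and>
      (\<forall>i j k. in_grid N0 i j k \<longrightarrow> (r i j k - rho i j k) / dt =
                 div_mob_grad N0
                   (\<lambda>a b c. D ((rho a b c + rhohat a b c) / 2) * ((rho a b c + rhohat a b c) / 2))
                   (\<lambda>a b c. Qdq C (r a b c) (rho a b c) + dt * (ln (r a b c) - ln (rho a b c)))
                   i j k)"
      using r eqv by blast
  next
    fix s assume s: "periodic_grid N0 s \<and> (\<forall>i j k. in_grid N0 i j k \<longrightarrow> s i j k > 0) \<and>
      (\<forall>i j k. in_grid N0 i j k \<longrightarrow> (s i j k - rho i j k) / dt =
                 div_mob_grad N0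
                   (\<lambda>a b c. D ((rho a b c + rhohat a b c) / 2) * ((rho a b c + rhohat a b c) / 2))
                   (\<lambda>a b c. Qdq C (s a b c) (rho a b c) + dt * (ln (s a b c) - ln (rho a b c)))
                   i j k)"
    have sp: "periodic_grid N0 s" using s by blast
    have spos: "\<And>a b c. s a b c > 0" using periodic_pos[OF N1 sp] s by blast
    have sphi: "\<And>i j k. in_grid N0 i j k \<Longrightarrow> P.Phi s i j k = 0" using s eqv by blast
    have le1: "s i j k \<le> r i j k" if "in_grid N0 i j k" for i j k
      by (rule P.compare[OF sp r(1) spos r(2)]) (use sphi r(3) that in auto)
    have le2: "r i j k \<le> s i j k" if "in_grid N0 i j k" for i j k
      by (rule P.compare[OF r(1) sp r(2) spos]) (use sphi r(3) that in auto)
    have "s i j k = r i j k" for i j k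
      using periodic_le[OF N1 sp r(1)] periodic_le[OF N1 r(1) sp] le1 le2
      by (meson order_antisym)
    then show "s = r" by (intro ext)
  qed
qed

end
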